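(* Let $(\Omega,\Sigma,\mathbb{P})$ be a probability space, let $X$ be an ideal of $L_0(\Sigma)$, and let $Y$ be a sublattice of $X$ such that the constant function $\mathbb 1\in Y$. Then the following are equivalent: (a) $Y$ is order closed in $X$; (b) $Y=L_0(\sigma(Y))\cap X$.
   Context: $L_0(\Sigma)$ denotes the vector lattice of all real-valued $\Sigma$-measurable functions modulo a.e. equality, with the a.e. pointwise order. An ideal of $L_0(\Sigma)$ is a vector subspace $X$ such that $|x|\le|y|$ a.e. and $y\in X$ imply $x\in X$. A sublattice is a vector subspace closed under $y\mapsto|y|$. A net $(x_\alpha)$ converges in order to $x$ in $X$ if there is a net $(z_\beta)$ in $X$ with $z_\beta\downarrow 0$ such that for every $\beta$ there is $\alpha_0$ with $|x_\alpha-x|\le z_\beta$ for all $\alpha\ge\alpha_0$; a subset $A\subset X$ is order closed if it contains every order limit in $X$ of nets from $A$. For $Y\subset L_0(\Sigma)$, $\sigma(Y)$ is the smallest sub-$\sigma$-algebra of $\Sigma$ which makes all members of $Y$ measurable and contains all $\mathbb{P}$-null sets, and $L_0(\sigma(Y))$ is the set of functions in $L_0(\Sigma)$ measurable with respect to $\sigma(Y)$. *)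

theory Defs
  imports "HOL-Probability.Probability"
begin

text \<open>Elements of L_0(Sigma) are represented by Sigma-measurable real functions;
  a subset of L_0(Sigma) is represented by the set of all its representatives,
  i.e. by a set of measurable functions that is closed under a.e. equality.\<close>

definition ae_le :: "'a measure \<Rightarrow> ('a \<Rightarrow> real) \<Rightarrow> ('a \<Rightarrow> real) \<Rightarrow> bool" where
  "ae_le M f g \<longleftrightarrow> (AE \<omega> in M. f \<omega> \<le> g \<omega>)"

definition ae_saturated :: "'a measure \<Rightarrow> ('a \<Rightarrow> real) set \<Rightarrow> bool" where
  "ae_saturated M A \<longleftrightarrow>
     (\<forall>f\<in>A. \<forall>g\<in>borel_measurable M. (AE \<omega> in M. f \<omega> = g \<omega>) \<longrightarrow> g \<in> A)"

definition L0_subspace :: "'a measure \<Rightarrow> ('a \<Rightarrow> real) set \<Rightarrow> bool" where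
  "L0_subspace M X \<longleftrightarrow> X \<subseteq> borel_measurable M \<and> ae_saturated M X \<and>
     (\<lambda>\<omega>. 0) \<in> X \<and>
     (\<forall>f\<in>X. \<forall>g\<in>X. (\<lambda>\<omega>. f \<omega> + g \<omega>) \<in> X) \<and>
     (\<forall>f\<in>X. \<forall>c::real. (\<lambda>\<omega>. c * f \<omega>) \<in> X)"

definition L0_ideal :: "'a measure \<Rightarrow> ('a \<Rightarrow> real) set \<Rightarrow> bool" where
  "L0_ideal M X \<longleftrightarrow> L0_subspace M X \<and>
     (\<forall>x\<in>borel_measurable M. \<forall>y\<in>X. ae_le M (\<lambda>\<omega>. \<bar>x \<omega>\<bar>) (\<lambda>\<omega>. \<bar>y \<omega>\<bar>) \<longrightarrow> x \<in> X)"

definition L0_sublattice :: "'a measure \<Rightarrow> ('a \<Rightarrow> real) set \<Rightarrow> bool" where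
  "L0_sublattice M Y \<longleftrightarrow> L0_subspace M Y \<and> (\<forall>y\<in>Y. (\<lambda>\<omega>. \<bar>y \<omega>\<bar>) \<in> Y)"

text \<open>z_beta decreasing to 0 in X, represented by its (downward directed) range Z:
  Z is a nonempty downward directed subset of X whose infimum in X is 0.\<close>
definition decr_to_zero_in :: "'a measure \<Rightarrow> ('a \<Rightarrow> real) set \<Rightarrow> ('a \<Rightarrow> real) set \<Rightarrow> bool" where
  "decr_to_zero_in M X Z \<longleftrightarrow> Z \<subseteq> X \<and> Z \<noteq> {} \<and>
     (\<forall>z1\<in>Z. \<forall>z2\<in>Z. \<exists>z3\<in>Z. ae_le M z3 z1 \<and> ae_le M z3 z2) \<and>
     (\<forall>z\<in>Z. ae_le M (\<lambda>\<omega>. 0) z) \<and>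
     (\<forall>w\<in>X. (\<forall>z\<in>Z. ae_le M w z) \<longrightarrow> ae_le M w (\<lambda>\<omega>. 0))"

text \<open>Order convergence in X of a net, the net being represented by its filter of
  tails F (a proper filter on the function space).\<close>
definition order_converges_in :: "'a measure \<Rightarrow> ('a \<Rightarrow> real) set \<Rightarrow> ('a \<Rightarrow> real) filter \<Rightarrow> ('a \<Rightarrow> real) \<Rightarrow> bool" where
  "order_converges_in M X F x \<longleftrightarrow> x \<in> X \<and>
     (\<exists>Z. decr_to_zero_in M X Z \<and>
        (\<forall>z\<in>Z. eventually (\<lambda>y. ae_le M (\<lambda>\<omega>. \<bar>y \<omega> - x \<omega>\<bar>) z) F))"

definition order_closed_in :: "'a measure \<Rightarrow> ('a \<Rightarrow> real) set \<Rightarrow> ('a \<Rightarrow> real) set \<Rightarrow> bool" where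
  "order_closed_in M X A \<longleftrightarrow>
     (\<forall>F x. F \<noteq> bot \<and> eventually (\<lambda>y. y \<in> A) F \<and> order_converges_in M X F x \<longrightarrow> x \<in> A)"

definition sigma_gen :: "'a measure \<Rightarrow> ('a \<Rightarrow> real) set \<Rightarrow> 'a measure" where
  "sigma_gen M Y = sigma (space M)
     ({f -` B \<inter> space M | f B. f \<in> Y \<and> B \<in> sets borel} \<union> null_sets M)"

end

theory Submission imports Defs begin

locale L22 =
  fixes M :: "'a measure" and X Y :: "('a \<Rightarrow> real) set"
  assumes P: "prob_space M" and XI: "L0_ideal M X" and YX: "Y \<subseteq> X"
    and YL: "L0_sublattice M Y" and one: "(\<lambda>\<omega>. 1) \<in> Y"
begin

interpretation prob_space M by (rule P)

lemma Xsub: "L0_subspace M X" using XI by (simp add: L0_ideal_def)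
lemma Ysub: "L0_subspace M Y" using YL by (simp add: L0_sublattice_def)

lemma X_meas: "f \<in> X \<Longrightarrow> f \<in> borel_measurable M"
  using Xsub by (auto simp: L0_subspace_def)
lemma Y_meas: "f \<in> Y \<Longrightarrow> f \<in> borel_measurable M"
  using Ysub by (auto simp: L0_subspace_def)
lemma Y_add: "f \<in> Y \<Longrightarrow> g \<in> Y \<Longrightarrow> (\<lambda>\<omega>. f \<omega> + g \<omega>) \<in> Y"
  using Ysub by (auto simp: L0_subspace_def)
lemma Y_scale: "f \<in> Y \<Longrightarrow> (\<lambda>\<omega>. c * f \<omega>) \<in> Y"
  using Ysub by (auto simp: L0_subspace_def)
lemma Y_zero: "(\<lambda>\<omega>. 0) \<in> Y"
  using Ysub by (auto simp: L0_subspace_def)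
lemma Y_abs: "f \<in> Y \<Longrightarrow> (\<lambda>\<omega>. \<bar>f \<omega>\<bar>) \<in> Y"
  using YL by (auto simp: L0_sublattice_def)
lemma Y_ae: "f \<in> Y \<Longrightarrow> g \<in> borel_measurable M \<Longrightarrow> (AE \<omega> in M. f \<omega> = g \<omega>) \<Longrightarrow> g \<in> Y"
  using Ysub by (auto simp: L0_subspace_def ae_saturated_def)
lemma Y_cong: "f \<in> Y \<Longrightarrow> g \<in> borel_measurable M \<Longrightarrow> (\<And>\<omega>. \<omega> \<in> space M \<Longrightarrow> f \<omega> = g \<omega>) \<Longrightarrow> g \<in> Y"
  by (rule Y_ae) (auto intro: AE_I2)
lemma Y_diff: "f \<in> Y \<Longrightarrow> g \<in> Y \<Longrightarrow> (\<lambda>\<omega>. f \<omega> - g \<omega>) \<in> Y"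
  using Y_add[OF _ Y_scale[of g "-1"], of f] by simp
lemma Y_const: "(\<lambda>\<omega>. c) \<in> Y"
  using Y_scale[OF one, of c] by simp
lemma Y_max: "f \<in> Y \<Longrightarrow> g \<in> Y \<Longrightarrow> (\<lambda>\<omega>. max (f \<omega>) (g \<omega>)) \<in> Y"
proof -
  assume f: "f \<in> Y" and g: "g \<in> Y"
  have "(\<lambda>\<omega>. (1/2) * ((f \<omega> + g \<omega>) + \<bar>f \<omega> - g \<omega>\<bar>)) \<in> Y"
    by (intro Y_scale Y_add Y_abs Y_diff f g)
  moreover have "(\<lambda>\<omega>. (1/2) * ((f \<omega> + g \<omega>) + \<bar>f \<omega> - g \<omega>\<bar>)) = (\<lambda>\<omega>. max (f \<omega>) (g \<omega>))"
    by (auto simp: max_def)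
  ultimately show ?thesis by simp
qed
lemma Y_min: "f \<in> Y \<Longrightarrow> g \<in> Y \<Longrightarrow> (\<lambda>\<omega>. min (f \<omega>) (g \<omega>)) \<in> Y"
proof -
  assume f: "f \<in> Y" and g: "g \<in> Y"
  have "(\<lambda>\<omega>. (1/2) * ((f \<omega> + g \<omega>) - \<bar>f \<omega> - g \<omega>\<bar>)) \<in> Y"
    by (intro Y_scale Y_add Y_abs Y_diff f g)
  moreover have "(\<lambda>\<omega>. (1/2) * ((f \<omega> + g \<omega>) - \<bar>f \<omega> - g \<omega>\<bar>)) = (\<lambda>\<omega>. min (f \<omega>) (g \<omega>))"
    by (auto simp: min_def)
  ultimately show ?thesis by simp
qed
lemma Y_sum: "finite I \<Longrightarrow> (\<And>i. i \<in> I \<Longrightarrow> f i \<in> Y) \<Longrightarrow> (\<lambda>\<omega>. \<Sum>i\<in>I. f i \<omega>) \<in> Y"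
proof (induction I rule: finite_induct)
  case empty then show ?case using Y_zero by simp
next
  case (insert a I) then show ?case using Y_add[of "f a" "\<lambda>\<omega>. \<Sum>i\<in>I. f i \<omega>"] by simp
qed

lemma X_add: "f \<in> X \<Longrightarrow> g \<in> X \<Longrightarrow> (\<lambda>\<omega>. f \<omega> + g \<omega>) \<in> X"
  using Xsub by (auto simp: L0_subspace_def)
lemma X_scale: "f \<in> X \<Longrightarrow> (\<lambda>\<omega>. c * f \<omega>) \<in> X"
  using Xsub by (auto simp: L0_subspace_def)
lemma X_dom: "f \<in> borel_measurable M \<Longrightarrow> g \<in> X \<Longrightarrow> (AE \<omega> in M. \<bar>f \<omega>\<bar> \<le> \<bar>g \<omega>\<bar>) \<Longrightarrow> f \<in> X"
  using XI by (auto simp: L0_ideal_def ae_le_def)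
lemma X_dom': "f \<in> borel_measurable M \<Longrightarrow> g \<in> X \<Longrightarrow> (\<And>\<omega>. \<omega> \<in> space M \<Longrightarrow> \<bar>f \<omega>\<bar> \<le> \<bar>g \<omega>\<bar>) \<Longrightarrow> f \<in> X"
  by (rule X_dom) (auto intro: AE_I2)
lemma X_one: "(\<lambda>\<omega>. 1) \<in> X" using one YX by auto
lemma X_abs: assumes "f \<in> X" shows "(\<lambda>\<omega>. \<bar>f \<omega>\<bar>) \<in> X"
proof (rule X_dom'[of "\<lambda>\<omega>. \<bar>f \<omega>\<bar>" f])
  show "(\<lambda>\<omega>. \<bar>f \<omega>\<bar>) \<in> borel_measurable M" using X_meas[OF assms] by measurable
qed (use assms in auto)
lemma X_bdd: "f \<in> borel_measurable M \<Longrightarrow> (\<And>\<omega>. \<omega> \<in> space M \<Longrightarrow> \<bar>f \<omega>\<bar> \<le> 1) \<Longrightarrow> f \<in> X"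
  by (rule X_dom'[OF _ X_one]) auto

lemma DOM:
  assumes oc: "order_closed_in M X Y"
    and y: "\<And>n. y n \<in> Y" and x: "x \<in> X" and g: "g \<in> X"
    and bd: "\<And>n \<omega>. \<omega> \<in> space M \<Longrightarrow> \<bar>y n \<omega>\<bar> \<le> g \<omega>"
    and lim: "\<And>\<omega>. \<omega> \<in> space M \<Longrightarrow> (\<lambda>n. y n \<omega>) \<longlonglongrightarrow> x \<omega>"
  shows "x \<in> Y"
proof -
  define z where "z n = (\<lambda>\<omega>. SUP k\<in>{n..}. \<bar>y k \<omega> - x \<omega>\<bar>)" for n
  have ym: "y n \<in> borel_measurable M" for n using y YX X_meas by blast
  have xm: "x \<in> borel_measurable M" using x X_meas by blast
  have gm: "g \<in> borel_measurable M" using g X_meas by blast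
  have bdd: "bdd_above ((\<lambda>k. \<bar>y k \<omega> - x \<omega>\<bar>) ` {n..})" if "\<omega> \<in> space M" for n \<omega>
  proof (rule bdd_aboveI2)
    fix k show "\<bar>y k \<omega> - x \<omega>\<bar> \<le> g \<omega> + \<bar>x \<omega>\<bar>" using bd[OF that, of k] by linarith
  qed
  have upper: "\<bar>y k \<omega> - x \<omega>\<bar> \<le> z n \<omega>" if "\<omega> \<in> space M" "n \<le> k" for n k \<omega>
    unfolding z_def using that bdd by (intro cSUP_upper) auto
  have zle: "z n \<omega> \<le> g \<omega> + \<bar>x \<omega>\<bar>" if "\<omega> \<in> space M" for n \<omega>
    unfolding z_def using bd[OF that] by (intro cSUP_least) (auto, smt (verit))
  have zge: "0 \<le> z n \<omega>" if "\<omega> \<in> space M" for n \<omega>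
    using upper[OF that, of n n] by simp
  have zmono: "z m \<omega> \<le> z n \<omega>" if "\<omega> \<in> space M" "n \<le> m" for n m \<omega>
    unfolding z_def using that bdd by (intro cSUP_subset_mono) auto
  have zm: "z n \<in> borel_measurable M" for n
    unfolding z_def using bdd ym xm by (intro borel_measurable_cSUP) auto
  have hX: "(\<lambda>\<omega>. g \<omega> + \<bar>x \<omega>\<bar>) \<in> X" by (intro X_add X_abs x g)
  have zX: "z n \<in> X" for n
  proof (rule X_dom'[OF zm hX])
    fix \<omega> assume "\<omega> \<in> space M"
    then show "\<bar>z n \<omega>\<bar> \<le> \<bar>g \<omega> + \<bar>x \<omega>\<bar>\<bar>"
      using zge[of \<omega> n] zle[of \<omega> n] by linarith
  qed
  define Z where "Z = range z"
  have small: "\<exists>N. \<forall>n\<ge>N. z n \<omega> < e" if "\<omega> \<in> space M" "e > 0" for \<omega> e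
  proof -
    have "\<forall>\<^sub>F k in sequentially. dist (y k \<omega>) (x \<omega>) < e/2"
      using tendstoD[OF lim[OF that(1)], of "e/2"] that(2) by simp
    then obtain N where N: "\<And>k. k \<ge> N \<Longrightarrow> \<bar>y k \<omega> - x \<omega>\<bar> < e/2"
      by (auto simp: eventually_sequentially dist_real_def)
    have "z n \<omega> \<le> e/2" if "n \<ge> N" for n
      unfolding z_def using N that by (intro cSUP_least) (auto intro: less_imp_le)
    then show ?thesis using that(2) by (intro exI[of _ N]) (auto intro: le_less_trans[OF _ half_gt_zero] simp: less_le_trans, smt (verit, best) field_sum_of_halves)
  qed
  have dz: "decr_to_zero_in M X Z"
    unfolding decr_to_zero_in_def Z_def
  proof (intro conjI ballI impI)
    show "range z \<subseteq> X" using zX by auto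
    show "range z \<noteq> {}" by auto
  next
    fix z1 z2 assume "z1 \<in> range z" "z2 \<in> range z"
    then obtain n m where "z1 = z n" "z2 = z m" by auto
    then show "\<exists>z3\<in>range z. ae_le M z3 z1 \<and> ae_le M z3 z2"
      by (intro bexI[of _ "z (max n m)"]) (auto simp: ae_le_def intro!: AE_I2 zmono)
  next
    fix z1 assume "z1 \<in> range z" then show "ae_le M (\<lambda>\<omega>. 0) z1"
      by (auto simp: ae_le_def intro!: AE_I2 zge)
  next
    fix w assume "w \<in> X" "\<forall>z1\<in>range z. ae_le M w z1"
    then have "\<forall>n. AE \<omega> in M. w \<omega> \<le> z n \<omega>" by (auto simp: ae_le_def)
    then have "AE \<omega> in M. \<forall>n. w \<omega> \<le> z n \<omega>" by (simp add: AE_all_countable)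
    then show "ae_le M w (\<lambda>\<omega>. 0)" unfolding ae_le_def using AE_space
    proof (eventually_elim)
      case (elim \<omega>)
      show ?case
      proof (rule ccontr)
        assume "\<not> w \<omega> \<le> 0"
        then obtain N where "\<forall>n\<ge>N. z n \<omega> < w \<omega>" using small[OF elim(2), of "w \<omega>"] by auto
        then show False using elim(1) by (meson le_refl linorder_not_le)
      qed
    qed
  qed
  define F where "F = filtermap y sequentially"
  have "F \<noteq> bot" unfolding F_def by (simp add: filtermap_bot_iff)
  moreover have "eventually (\<lambda>f. f \<in> Y) F" unfolding F_def by (simp add: eventually_filtermap y)
  moreover have "order_converges_in M X F x"
    unfolding order_converges_in_def
  proof (intro conjI exI[of _ Z] ballI x dz)
    fix z1 assume "z1 \<in> Z"
    then obtain n where "z1 = z n" by (auto simp: Z_def)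
    then show "eventually (\<lambda>f. ae_le M (\<lambda>\<omega>. \<bar>f \<omega> - x \<omega>\<bar>) z1) F"
      unfolding F_def eventually_filtermap eventually_sequentially
      by (intro exI[of _ n]) (auto simp: ae_le_def intro!: AE_I2 upper)
  qed
  ultimately show ?thesis using oc unfolding order_closed_in_def by blast
qed

definition "G = {f -` B \<inter> space M | f B. f \<in> Y \<and> B \<in> sets borel} \<union> null_sets M"

lemma G_Pow: "G \<subseteq> Pow (space M)"
  unfolding G_def using sets.sets_into_space by auto
lemma G_sets: "G \<subseteq> sets M"
  unfolding G_def using Y_meas by (auto simp: measurable_sets)

lemma SG_sets: "sets (sigma_gen M Y) = sigma_sets (space M) G"
  unfolding sigma_gen_def G_def[symmetric] by (rule sets_measure_of[OF G_Pow])
lemma SG_space: "space (sigma_gen M Y) = space M"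
  unfolding sigma_gen_def G_def[symmetric] by (rule space_measure_of[OF G_Pow])
lemma SG_sub: "sets (sigma_gen M Y) \<subseteq> sets M"
  unfolding SG_sets using sets.sigma_sets_subset[OF G_sets] .
lemma SG_null: "null_sets M \<subseteq> sets (sigma_gen M Y)"
  unfolding SG_sets G_def by auto
lemma SG_meas_M: "f \<in> borel_measurable (sigma_gen M Y) \<Longrightarrow> f \<in> borel_measurable M"
  by (rule measurableI) (use SG_sub in \<open>auto simp: SG_space dest: measurable_sets\<close>)
lemma Y_SG: "f \<in> Y \<Longrightarrow> f \<in> borel_measurable (sigma_gen M Y)"
  by (rule measurableI) (auto simp: SG_space SG_sets G_def)

definition "S = {A. A \<subseteq> space M \<and> (indicator A :: 'a \<Rightarrow> real) \<in> Y}"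

lemma S_sets: "A \<in> S \<Longrightarrow> A \<in> sets M"
  unfolding S_def using Y_meas borel_measurable_indicator_iff by (metis (no_types, lifting) Int_absorb2 mem_Collect_eq)

lemma ind_X: "A \<in> sets M \<Longrightarrow> (indicator A :: 'a \<Rightarrow> real) \<in> X"
  by (rule X_bdd) (auto simp: indicator_def)

lemma S_sa:
  assumes oc: "order_closed_in M X Y"
  shows "sigma_algebra (space M) S"
proof -
  have e: "{} \<in> S"
  proof -
    have "(indicator {} :: 'a \<Rightarrow> real) = (\<lambda>\<omega>. 0)" by (rule ext) simp
    then show ?thesis using Y_zero by (simp add: S_def)
  qed
  have c: "space M - A \<in> S" if A: "A \<in> S" for A
  proof -
    have "(\<lambda>\<omega>. 1 - indicator A \<omega> :: real) \<in> Y" using A Y_diff[OF one] by (simp add: S_def)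
    moreover have "space M - A \<in> sets M" using S_sets[OF A] by auto
    then have "(indicator (space M - A) :: 'a \<Rightarrow> real) \<in> borel_measurable M"
      by (rule borel_measurable_indicator)
    moreover have "1 - indicator A \<omega> = (indicator (space M - A) \<omega> :: real)" if "\<omega> \<in> space M" for \<omega>
      using that by (simp add: indicator_def)
    ultimately have "(indicator (space M - A) :: 'a \<Rightarrow> real) \<in> Y" by (rule Y_cong)
    then show ?thesis by (simp add: S_def)
  qed
  have un: "A \<union> B \<in> S" if "A \<in> S" "B \<in> S" for A B
  proof -
    have "(\<lambda>\<omega>. max (indicator A \<omega>) (indicator B \<omega>) :: real) \<in> Y"
      using that Y_max by (simp add: S_def)
    moreover have "(\<lambda>\<omega>. max (indicator A \<omega>) (indicator B \<omega>) :: real) = indicator (A \<union> B)"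
      by (rule ext) (simp add: indicator_def)
    ultimately show ?thesis using that by (simp add: S_def)
  qed
  show ?thesis
    unfolding sigma_algebra_iff2
  proof (intro conjI ballI allI impI e c)
  show "S \<subseteq> Pow (space M)" by (auto simp: S_def)
  fix A :: "nat \<Rightarrow> 'a set" assume A: "range A \<subseteq> S"
  define U where "U n = (\<Union>i<n. A i)" for n
  have U: "U n \<in> S" for n
  proof (induction n)
    case 0 then show ?case using e by (simp add: U_def)
  next
    case (Suc n)
    have "U (Suc n) = A n \<union> U n" by (auto simp: U_def lessThan_Suc)
    then show ?case using un[of "A n" "U n"] Suc A by auto
  qed
  have As: "A i \<in> sets M" for i using A S_sets by auto
  have "(indicator (\<Union>i. A i) :: 'a \<Rightarrow> real) \<in> Y"
  proof (rule DOM[OF oc, of "\<lambda>n. indicator (U n)"])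
    show "indicator (U n) \<in> Y" for n using U by (simp add: S_def)
    show "(indicator (\<Union>i. A i) :: 'a \<Rightarrow> real) \<in> X" using As by (intro ind_X) auto
    show "(\<lambda>\<omega>. 1) \<in> X" by (rule X_one)
    show "\<bar>indicator (U n) \<omega>\<bar> \<le> (1::real)" for n \<omega> by (auto simp: indicator_def)
    fix \<omega>
    show "(\<lambda>n. indicator (U n) \<omega>) \<longlonglongrightarrow> (indicator (\<Union>i. A i) \<omega> :: real)"
    proof (cases "\<omega> \<in> (\<Union>i. A i)")
      case True
      then obtain i where "\<omega> \<in> A i" by auto
      then have "eventually (\<lambda>n. indicator (U n) \<omega> = (indicator (\<Union>i. A i) \<omega> :: real)) sequentially"
        unfolding eventually_sequentially using True
        by (intro exI[of _ "Suc i"]) (auto simp: U_def indicator_def)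
      then show ?thesis by (rule tendsto_eventually)
    next
      case False
      then have "indicator (U n) \<omega> = (indicator (\<Union>i. A i) \<omega> :: real)" for n
        by (auto simp: U_def indicator_def)
      then show ?thesis by simp
    qed
  qed
  then show "(\<Union>i. A i) \<in> S" using A by (auto simp: S_def)
qed
qed

lemma S_thr:
  assumes oc: "order_closed_in M X Y" and y: "y \<in> Y"
  shows "{\<omega> \<in> space M. a < y \<omega>} \<in> S"
proof -
  have ym: "y \<in> borel_measurable M" using Y_meas y .
  have set: "{\<omega> \<in> space M. a < y \<omega>} \<in> sets M" using ym by measurable
  have "(indicator {\<omega> \<in> space M. a < y \<omega>} :: 'a \<Rightarrow> real) \<in> Y"
  proof (rule DOM[OF oc, of "\<lambda>n \<omega>. min (real n * max (y \<omega> - a) 0) 1"])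
    show "(\<lambda>\<omega>. min (real n * max (y \<omega> - a) 0) 1) \<in> Y" for n
      by (intro Y_min Y_scale Y_max Y_diff y Y_const)
    show "(indicator {\<omega> \<in> space M. a < y \<omega>} :: 'a \<Rightarrow> real) \<in> X" using set by (rule ind_X)
    show "(\<lambda>\<omega>. 1) \<in> X" by (rule X_one)
    show "\<bar>min (real n * max (y \<omega> - a) 0) 1\<bar> \<le> 1" for n \<omega> by auto
    fix \<omega> assume \<omega>: "\<omega> \<in> space M"
    show "(\<lambda>n. min (real n * max (y \<omega> - a) 0) 1) \<longlonglongrightarrow> indicator {\<omega> \<in> space M. a < y \<omega>} \<omega>"
    proof (cases "a < y \<omega>")
      case True
      obtain N where N: "1 / (y \<omega> - a) < real N" using reals_Archimedean2 by blast
      have "min (real n * max (y \<omega> - a) 0) 1 = 1" if "n \<ge> N" for n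
      proof -
        have "1 < real N * (y \<omega> - a)" using N True by (simp add: field_simps)
        also have "\<dots> \<le> real n * (y \<omega> - a)" using that True by (intro mult_right_mono) auto
        finally show ?thesis using True by auto
      qed
      then have "eventually (\<lambda>n. min (real n * max (y \<omega> - a) 0) 1 = indicator {\<omega> \<in> space M. a < y \<omega>} \<omega>) sequentially"
        unfolding eventually_sequentially using True \<omega> by (auto simp: indicator_def)
      then show ?thesis by (rule tendsto_eventually)
    next
      case False
      then show ?thesis by (simp add: indicator_def)
    qed
  qed
  then show ?thesis by (auto simp: S_def)
qed

lemma SG_S:
  assumes oc: "order_closed_in M X Y"
  shows "sets (sigma_gen M Y) \<subseteq> S"
  unfolding SG_sets
proof (rule sigma_algebra.sigma_sets_subset[OF S_sa[OF oc]])
  show "G \<subseteq> S"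
  proof
    fix A assume "A \<in> G"
    then consider (g) f B where "A = f -` B \<inter> space M" "f \<in> Y" "B \<in> sets borel" | (n) "A \<in> null_sets M"
      unfolding G_def by blast
    then show "A \<in> S"
    proof cases
      case g
      interpret sa: sigma_algebra "space M" S by (rule S_sa[OF oc])
      have "f \<in> borel_measurable (sigma (space M) S)"
        unfolding borel_measurable_iff_greater
        using S_thr[OF oc g(2)] sa.sets_measure_of_eq sa.space_measure_of_eq by auto
      then have "f -` B \<inter> space (sigma (space M) S) \<in> sets (sigma (space M) S)"
        using g(3) by (rule measurable_sets)
      then show ?thesis using g(1) sa.sets_measure_of_eq sa.space_measure_of_eq by auto
    next
      case n
      have "A \<subseteq> space M" using n sets.sets_into_space by auto
      moreover have "(indicator A :: 'a \<Rightarrow> real) \<in> Y"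
      proof (rule Y_ae[OF Y_zero])
        show "(indicator A :: 'a \<Rightarrow> real) \<in> borel_measurable M" using n by auto
        show "AE \<omega> in M. 0 = (indicator A \<omega> :: real)" using AE_not_in[OF n] by eventually_elim auto
      qed
      ultimately show ?thesis by (simp add: S_def)
    qed
  qed
qed

lemma a_to_b:
  assumes oc: "order_closed_in M X Y"
  shows "Y = {f \<in> X. f \<in> borel_measurable (sigma_gen M Y)}"
proof
  show "Y \<subseteq> {f \<in> X. f \<in> borel_measurable (sigma_gen M Y)}" using YX Y_SG by auto
  show "{f \<in> X. f \<in> borel_measurable (sigma_gen M Y)} \<subseteq> Y"
  proof safe
    fix f assume fX: "f \<in> X" and fN: "f \<in> borel_measurable (sigma_gen M Y)"
    obtain F where sf: "\<And>i. simple_function (sigma_gen M Y) (F i)"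
      and lim: "\<And>\<omega>. \<omega> \<in> space (sigma_gen M Y) \<Longrightarrow> (\<lambda>i. F i \<omega>) \<longlonglongrightarrow> f \<omega>"
      and bd: "\<And>i \<omega>. \<omega> \<in> space (sigma_gen M Y) \<Longrightarrow> dist (F i \<omega>) 0 \<le> 2 * dist (f \<omega>) 0"
      using borel_measurable_implies_sequence_metric[OF fN, of 0] by blast
    have FY: "F i \<in> Y" for i
    proof -
      let ?N = "sigma_gen M Y"
      have "(\<lambda>\<omega>. \<Sum>v \<in> F i ` space ?N. indicator (F i -` {v} \<inter> space ?N) \<omega> * v) \<in> Y"
      proof (rule Y_sum)
        show "finite (F i ` space ?N)" by (rule simple_functionD(1)[OF sf])
        fix v assume "v \<in> F i ` space ?N"
        have "F i -` {v} \<inter> space ?N \<in> sets ?N" by (rule simple_functionD(2)[OF sf])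
        then have "F i -` {v} \<inter> space ?N \<in> S" using SG_S[OF oc] by blast
        then have "(indicator (F i -` {v} \<inter> space ?N) :: 'a \<Rightarrow> real) \<in> Y" by (simp add: S_def)
        then have "(\<lambda>\<omega>. v * indicator (F i -` {v} \<inter> space ?N) \<omega>) \<in> Y"
          by (rule Y_scale)
        moreover have "(\<lambda>\<omega>. v * indicator (F i -` {v} \<inter> space ?N) \<omega>) = (\<lambda>\<omega>. indicator (F i -` {v} \<inter> space ?N) \<omega> * v)"
          by (rule ext) (rule mult.commute)
        ultimately show "(\<lambda>\<omega>. indicator (F i -` {v} \<inter> space ?N) \<omega> * v) \<in> Y" by simp
      qed
      moreover have "F i \<in> borel_measurable M"
        by (rule SG_meas_M[OF borel_measurable_simple_function[OF sf]])
      ultimately show ?thesis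
      proof (rule Y_cong)
        fix \<omega> assume "\<omega> \<in> space M"
        then have "\<omega> \<in> space ?N" by (simp add: SG_space)
        from simple_function_indicator_representation_banach[OF sf[of i] this]
        show "(\<Sum>v \<in> F i ` space ?N. indicator (F i -` {v} \<inter> space ?N) \<omega> * v) = F i \<omega>"
          by (simp only: real_scaleR_def)
      qed
    qed
    show "f \<in> Y"
    proof (rule DOM[OF oc FY fX])
      show "(\<lambda>\<omega>. 2 * \<bar>f \<omega>\<bar>) \<in> X" using X_scale[OF X_abs[OF fX]] .
      show "\<bar>F n \<omega>\<bar> \<le> 2 * \<bar>f \<omega>\<bar>" if "\<omega> \<in> space M" for n \<omega> using bd[of \<omega> n] that by (simp add: SG_space)
      show "(\<lambda>n. F n \<omega>) \<longlonglongrightarrow> f \<omega>" if "\<omega> \<in> space M" for \<omega> using lim[of \<omega>] that by (simp add: SG_space)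
    qed
  qed
qed

lemma LIM:
  fixes g :: "nat \<Rightarrow> 'a \<Rightarrow> real" and x :: "'a \<Rightarrow> real"
  assumes g: "\<And>n. g n \<in> borel_measurable (sigma_gen M Y)"
    and ae: "AE \<omega> in M. (\<lambda>n. g n \<omega>) \<longlonglongrightarrow> x \<omega>"
    and xm: "x \<in> borel_measurable M"
  shows "x \<in> borel_measurable (sigma_gen M Y)"
proof -
  let ?N = "sigma_gen M Y"
  from ae obtain E0 where E0: "{\<omega> \<in> space M. \<not> (\<lambda>n. g n \<omega>) \<longlonglongrightarrow> x \<omega>} \<subseteq> E0"
    "emeasure M E0 = 0" "E0 \<in> sets M" by (rule AE_E)
  have E0n: "E0 \<in> null_sets M" using E0(2,3) by (intro null_setsI)
  have E0N: "E0 \<in> sets ?N" using SG_null E0n by blast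
  have E0s: "E0 \<inter> space ?N \<in> sets ?N" using E0N by (simp add: sets.Int_space_eq2)
  define hh where "hh = (\<lambda>\<omega>. if \<omega> \<in> E0 then 0 else x \<omega>)"
  have "hh \<in> borel_measurable ?N"
  proof (rule borel_measurable_LIMSEQ_real[where u="\<lambda>n \<omega>. if \<omega> \<in> E0 then 0 else g n \<omega>"])
    show "(\<lambda>\<omega>. if \<omega> \<in> E0 then 0 else g n \<omega>) \<in> borel_measurable ?N" for n
      by (rule measurable_If_set[OF borel_measurable_const g E0s])
    fix \<omega> assume om: "\<omega> \<in> space ?N"
    show "(\<lambda>n. if \<omega> \<in> E0 then 0 else g n \<omega>) \<longlonglongrightarrow> hh \<omega>"
    proof (cases "\<omega> \<in> E0")
      case True then show ?thesis by (simp add: hh_def)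
    next
      case False
      have "\<omega> \<in> space M" using om by (simp add: SG_space)
      then have "(\<lambda>n. g n \<omega>) \<longlonglongrightarrow> x \<omega>" using E0(1) False by blast
      then show ?thesis using False by (simp add: hh_def)
    qed
  qed
  show ?thesis
  proof (rule measurableI)
    show "x \<omega> \<in> space borel" for \<omega> by simp
    fix B :: "real set" assume B: "B \<in> sets borel"
    have "x -` B \<inter> space ?N = (hh -` B \<inter> space ?N - E0) \<union> ((x -` B \<inter> space M) \<inter> E0)"
      unfolding SG_space hh_def by auto
    moreover have "hh -` B \<inter> space ?N \<in> sets ?N" using \<open>hh \<in> borel_measurable ?N\<close> B by (rule measurable_sets)
    moreover have "(x -` B \<inter> space M) \<inter> E0 \<in> null_sets M"
      using measurable_sets[OF xm B] E0n by (intro null_set_Int1)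
    then have "(x -` B \<inter> space M) \<inter> E0 \<in> sets ?N" using SG_null by blast
    ultimately show "x -` B \<inter> space ?N \<in> sets ?N" using E0N by (metis sets.Diff sets.Un)
  qed
qed

definition "psi (r::real) = max 0 (min r 1)"

lemma psi_mono: "a \<le> b \<Longrightarrow> psi a \<le> psi b" by (auto simp: psi_def)
lemma psi_le: "0 \<le> r \<Longrightarrow> psi r \<le> r" by (auto simp: psi_def)
lemma psi_bd: "0 \<le> psi a" "psi a \<le> 1" by (auto simp: psi_def)
lemma psi_meas: assumes [measurable]: "f \<in> borel_measurable M" shows "(\<lambda>\<omega>. psi (f \<omega>)) \<in> borel_measurable M"
  unfolding psi_def by measurable
lemma psi_int: "f \<in> borel_measurable M \<Longrightarrow> integrable M (\<lambda>\<omega>. psi (f \<omega>))"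
  by (rule integrable_const_bound[where B=1]) (auto intro!: AE_I2 psi_meas simp: psi_def)

lemma CNT:
  assumes dz: "decr_to_zero_in M X Z"
  shows "\<exists>zz. (\<forall>n. zz n \<in> Z) \<and> (AE \<omega> in M. (\<lambda>n. zz n \<omega>) \<longlonglongrightarrow> 0)"
proof -
  have ZX: "Z \<subseteq> X" and Zne: "Z \<noteq> {}"
    and dir: "\<And>z1 z2. z1 \<in> Z \<Longrightarrow> z2 \<in> Z \<Longrightarrow> \<exists>z3\<in>Z. ae_le M z3 z1 \<and> ae_le M z3 z2"
    and pos: "\<And>z. z \<in> Z \<Longrightarrow> AE \<omega> in M. 0 \<le> z \<omega>"
    and inf: "\<And>w. w \<in> X \<Longrightarrow> (\<forall>z\<in>Z. ae_le M w z) \<Longrightarrow> AE \<omega> in M. w \<omega> \<le> 0"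
    using dz unfolding decr_to_zero_in_def ae_le_def by auto
  have Zm: "z \<in> borel_measurable M" if "z \<in> Z" for z using that ZX X_meas by auto
  define phi where "phi z = (\<integral>\<omega>. psi (z \<omega>) \<partial>M)" for z
  have phi_mono: "phi z1 \<le> phi z2" if "z1 \<in> Z" "z2 \<in> Z" "ae_le M z1 z2" for z1 z2
  proof -
    have "AE \<omega> in M. psi (z1 \<omega>) \<le> psi (z2 \<omega>)"
      using that(3) unfolding ae_le_def by eventually_elim (rule psi_mono)
    then show ?thesis unfolding phi_def using that
      by (intro integral_mono_AE psi_int Zm)
  qed
  have phi0: "0 \<le> phi z" for z unfolding phi_def by (intro integral_nonneg_AE AE_I2 psi_bd)
  define c where "c = Inf (phi ` Z)"
  have bddb: "bdd_below (phi ` Z)" unfolding bdd_below_def using phi0 by blast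
  have cle: "c \<le> phi z" if "z \<in> Z" for z unfolding c_def using that bddb by (intro cInf_lower) auto
  have "\<forall>n. \<exists>z\<in>Z. phi z < c + 1 / real (Suc n)"
  proof
    fix n
    have "Inf (phi ` Z) < c + 1 / real (Suc n)" unfolding c_def by simp
    then show "\<exists>z\<in>Z. phi z < c + 1 / real (Suc n)" using Zne bddb by (subst (asm) cInf_less_iff) auto
  qed
  then obtain zs where zs: "\<And>n. zs n \<in> Z" "\<And>n. phi (zs n) < c + 1 / real (Suc n)" by metis
  define pick where "pick z1 z2 = (SOME z3. z3 \<in> Z \<and> ae_le M z3 z1 \<and> ae_le M z3 z2)" for z1 z2
  have pick: "pick z1 z2 \<in> Z \<and> ae_le M (pick z1 z2) z1 \<and> ae_le M (pick z1 z2) z2"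
    if "z1 \<in> Z" "z2 \<in> Z" for z1 z2
    unfolding pick_def using dir[OF that] by (rule someI2_bex) auto
  define zz where "zz = rec_nat (zs 0) (\<lambda>n p. pick p (zs (Suc n)))"
  have zz0: "zz 0 = zs 0" and zzS: "zz (Suc n) = pick (zz n) (zs (Suc n))" for n by (simp_all add: zz_def)
  have zzZ: "zz n \<in> Z" for n
    by (induction n) (use zs pick in \<open>auto simp: zz0 zzS\<close>)
  have zzdec: "ae_le M (zz (Suc n)) (zz n)" for n using pick[OF zzZ zs(1)] by (simp add: zzS)
  have zzs: "ae_le M (zz n) (zs n)" for n
  proof (cases n)
    case 0 then show ?thesis by (simp add: zz0 ae_le_def)
  next
    case (Suc m) then show ?thesis using pick[OF zzZ zs(1)] by (simp add: zzS)
  qed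
  have phizz: "phi (zz n) < c + 1 / real (Suc n)" for n
    using phi_mono[OF zzZ zs(1) zzs, of n] zs(2)[of n] by linarith
  define q where "q n \<omega> = psi (zz n \<omega>)" for n \<omega>
  define h where "h \<omega> = (INF n. q n \<omega>)" for \<omega>
  have qbdd: "bdd_below (range (\<lambda>n. q n \<omega>))" for \<omega> unfolding q_def bdd_below_def using psi_bd by blast
  have hle: "h \<omega> \<le> q n \<omega>" for n \<omega> unfolding h_def using qbdd by (intro cINF_lower) auto
  have hge: "0 \<le> h \<omega>" for \<omega> unfolding h_def q_def by (intro cINF_greatest psi_bd) auto
  have hm: "h \<in> borel_measurable M" unfolding h_def q_def
    using qbdd[unfolded q_def] by (intro borel_measurable_cINF psi_meas Zm zzZ) auto
  have hX: "h \<in> X"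
  proof (rule X_bdd[OF hm])
    fix \<omega> show "\<bar>h \<omega>\<bar> \<le> 1" using hge[of \<omega>] hle[of \<omega> 0] psi_bd[of "zz 0 \<omega>"] by (simp add: q_def)
  qed
  have key: "ae_le M h z" if z: "z \<in> Z" for z
  proof -
    have "\<forall>n. \<exists>w\<in>Z. ae_le M w z \<and> ae_le M w (zz n)" using dir[OF z zzZ] by blast
    then obtain w where w: "\<And>n. w n \<in> Z" "\<And>n. ae_le M (w n) z" "\<And>n. ae_le M (w n) (zz n)" by metis
    define D where "D \<omega> = max 0 (h \<omega> - psi (z \<omega>))" for \<omega>
    have Dm: "D \<in> borel_measurable M" unfolding D_def
      by (intro borel_measurable_max borel_measurable_const borel_measurable_diff hm psi_meas Zm z)
    have hle1: "h \<omega> \<le> 1" for \<omega> using hle[of \<omega> 0] psi_bd(2)[of "zz 0 \<omega>"] by (simp add: q_def)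
    have Dbd: "norm (D \<omega>) \<le> 1" for \<omega>
      using hge[of \<omega>] hle1[of \<omega>] psi_bd(1)[of "z \<omega>"] unfolding D_def by simp
    have Dint: "integrable M D"
      by (rule integrable_const_bound[where B=1, OF AE_I2[OF Dbd] Dm])
    have Dn: "integral\<^sup>L M D < 1 / real (Suc n)" for n
    proof -
      have "AE \<omega> in M. D \<omega> \<le> q n \<omega> - psi (w n \<omega>)"
        using w(2)[of n] w(3)[of n] unfolding ae_le_def
      proof eventually_elim
        case (elim \<omega>)
        have "psi (w n \<omega>) \<le> psi (z \<omega>)" "psi (w n \<omega>) \<le> q n \<omega>"
          using elim by (auto simp: q_def intro: psi_mono)
        then show ?case using hle[of \<omega> n] by (simp add: D_def)
      qed
      moreover have i1: "integrable M (\<lambda>\<omega>. psi (zz n \<omega>))" by (rule psi_int[OF Zm[OF zzZ]])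
      moreover have i2: "integrable M (\<lambda>\<omega>. psi (w n \<omega>))" by (rule psi_int[OF Zm[OF w(1)]])
      ultimately have "integral\<^sup>L M D \<le> (\<integral>\<omega>. q n \<omega> - psi (w n \<omega>) \<partial>M)"
        unfolding q_def by (intro integral_mono_AE Dint Bochner_Integration.integrable_diff)
      also have "\<dots> = phi (zz n) - phi (w n)" unfolding phi_def q_def
        by (intro Bochner_Integration.integral_diff psi_int Zm zzZ w(1))
      also have "\<dots> < 1 / real (Suc n)" using phizz[of n] cle[OF w(1)[of n]] by linarith
      finally show ?thesis .
    qed
    have D0: "integral\<^sup>L M D = 0"
    proof (rule ccontr)
      assume "integral\<^sup>L M D \<noteq> 0"
      moreover have "0 \<le> integral\<^sup>L M D" unfolding D_def by (intro integral_nonneg_AE AE_I2) auto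
      ultimately have "0 < integral\<^sup>L M D" by simp
      then obtain n where "inverse (real (Suc n)) < integral\<^sup>L M D" using reals_Archimedean by blast
      then show False using Dn[of n] by (simp add: inverse_eq_divide)
    qed
    then have "AE \<omega> in M. D \<omega> = 0" using Dint by (subst (asm) integral_nonneg_eq_0_iff_AE) (auto simp: D_def)
    then show ?thesis using pos[OF z] unfolding ae_le_def
    proof eventually_elim
      case (elim \<omega>)
      then have "h \<omega> \<le> psi (z \<omega>)" unfolding D_def by simp
      then show ?case using psi_le[OF elim(2)] by linarith
    qed
  qed
  have h0: "AE \<omega> in M. h \<omega> \<le> 0" using inf[OF hX] key by auto
  have dec: "AE \<omega> in M. \<forall>n. zz (Suc n) \<omega> \<le> zz n \<omega>" using zzdec by (simp add: ae_le_def AE_all_countable)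
  have ps: "AE \<omega> in M. \<forall>n. 0 \<le> zz n \<omega>" using pos zzZ by (simp add: AE_all_countable)
  have "AE \<omega> in M. (\<lambda>n. zz n \<omega>) \<longlonglongrightarrow> 0"
    using h0 dec ps
  proof eventually_elim
    case (elim \<omega>)
    have "decseq (\<lambda>n. q n \<omega>)"
      by (rule decseq_SucI) (use elim in \<open>auto simp: q_def intro: psi_mono\<close>)
    then have "(\<lambda>n. q n \<omega>) \<longlonglongrightarrow> h \<omega>" unfolding h_def using qbdd by (intro LIMSEQ_decseq_INF) auto
    moreover have "h \<omega> = 0" using elim hge[of \<omega>] by auto
    ultimately have ql: "(\<lambda>n. q n \<omega>) \<longlonglongrightarrow> 0" by simp
    then have "eventually (\<lambda>n. q n \<omega> < 1) sequentially" by (rule order_tendstoD) simp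
    then have "eventually (\<lambda>n. q n \<omega> = zz n \<omega>) sequentially"
      by eventually_elim (use elim in \<open>auto simp: q_def psi_def split: if_splits\<close>)
    then show ?case using ql by (rule Lim_transform_eventually[rotated])
  qed
  then show ?thesis using zzZ by blast
qed

lemma b_to_a:
  assumes eq: "Y = {f \<in> X. f \<in> borel_measurable (sigma_gen M Y)}"
  shows "order_closed_in M X Y"
  unfolding order_closed_in_def
proof (intro allI impI, elim conjE)
  fix F x assume Fb: "F \<noteq> bot" and ev: "eventually (\<lambda>y. y \<in> Y) F" and oc: "order_converges_in M X F x"
  from oc obtain Z where x: "x \<in> X" and dz: "decr_to_zero_in M X Z"
    and evZ: "\<forall>z\<in>Z. eventually (\<lambda>y. ae_le M (\<lambda>\<omega>. \<bar>y \<omega> - x \<omega>\<bar>) z) F"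
    unfolding order_converges_in_def by blast
  obtain zz where zz: "\<And>n. zz n \<in> Z" and zl: "AE \<omega> in M. (\<lambda>n. zz n \<omega>) \<longlonglongrightarrow> 0"
    using CNT[OF dz] by blast
  have "\<forall>n. \<exists>y. y \<in> Y \<and> ae_le M (\<lambda>\<omega>. \<bar>y \<omega> - x \<omega>\<bar>) (zz n)"
  proof
    fix n
    have "eventually (\<lambda>y. y \<in> Y \<and> ae_le M (\<lambda>\<omega>. \<bar>y \<omega> - x \<omega>\<bar>) (zz n)) F"
      using ev evZ zz by (auto intro: eventually_conj)
    then show "\<exists>y. y \<in> Y \<and> ae_le M (\<lambda>\<omega>. \<bar>y \<omega> - x \<omega>\<bar>) (zz n)"
      using eventually_happens Fb by blast
  qed
  then obtain yn where yn: "\<And>n. yn n \<in> Y" "\<And>n. ae_le M (\<lambda>\<omega>. \<bar>yn n \<omega> - x \<omega>\<bar>) (zz n)" by metis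
  have "AE \<omega> in M. \<forall>n. \<bar>yn n \<omega> - x \<omega>\<bar> \<le> zz n \<omega>" using yn(2) by (simp add: ae_le_def AE_all_countable)
  then have "AE \<omega> in M. (\<lambda>n. yn n \<omega>) \<longlonglongrightarrow> x \<omega>" using zl
  proof eventually_elim
    case (elim \<omega>)
    have "(\<lambda>n. yn n \<omega> - x \<omega>) \<longlonglongrightarrow> 0"
      by (rule Lim_null_comparison[OF _ elim(2)]) (use elim(1) in simp)
    then show ?case by (simp add: LIM_zero_iff)
  qed
  then have "x \<in> borel_measurable (sigma_gen M Y)"
    by (rule LIM[OF Y_SG[OF yn(1)]]) (rule X_meas[OF x])
  then show "x \<in> Y" using x eq by blast
qed

end

theorem lemma2p2:
  fixes M :: "'a measure" and X Y :: "('a \<Rightarrow> real) set"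
  assumes "prob_space M"
    and "L0_ideal M X"
    and "Y \<subseteq> X" and "L0_sublattice M Y"
    and "(\<lambda>\<omega>. 1) \<in> Y"
  shows "order_closed_in M X Y \<longleftrightarrow>
         Y = {f \<in> X. f \<in> borel_measurable (sigma_gen M Y)}"
proof -
  have "L22 M X Y" using assms by (simp add: L22_def)
  then interpret L22 M X Y .
  show ?thesis using a_to_b b_to_a by blast
qed

end
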